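(* Consider the transverse-field Ising chain $H=-J\sum_\ell[\sigma^x_\ell\sigma^x_{\ell+1}+h\sigma^z_\ell]$ on a periodic chain of $L$ sites, restricted to the antiperiodic (Neveu–Schwarz) fermion sector with momenta $p=2\pi(n+1/2)/L$, $n$ integer, and let $\alpha_p$ be the Bogoliubov fermions diagonalizing the post-quench Hamiltonian, $n_p=\alpha^\dagger_p\alpha_p$. For $0<p<\pi$ define the ghost fermions $g^\dagger_p=(1-n_{-p})\alpha^\dagger_p+n_{-p}\alpha_p$ and the pair fermions $d^\dagger_p=\prod_{0<k<p}(2\tilde d^\dagger_k\tilde d_k-1)\prod_{0<k\neq p}(2g^\dagger_kg_k-1)\,\tilde d^\dagger_p$ with $\tilde d^\dagger_p=(\alpha^\dagger_p+\alpha_p)\alpha^\dagger_{-p}$; these satisfy canonical anticommutation relations, with $n^d_p=d^\dagger_pd_p$, $n^g_p=g^\dagger_pg_p$, $e^{i\pi\mathcal N_g}=\prod_{0<k<\pi}(2n^g_k-1)$, and the inverse map $\alpha^\dagger_p=(1-n^d_p)g^\dagger_p+n^d_pg_p$, $\alpha^\dagger_{-p}=\prod_{0<k<p}(2n^d_k-1)\,d^\dagger_p\,e^{i\pi\mathcal N_g}(g^\dagger_p-g_p)$. Let $a_i=\frac{1}{\sqrt L}\sum_{0<p<\pi}W_i(p)g_p+W_i(-p)g^\dagger_p$ (with $W_i(-p)=W_i^\dagger(p)$) be Majorana fermions that are linear combinations of the Bogoliubov fermions $\alpha$, written via the inverse map so that the coefficients $W_i(p)$ are operators built from pair fermions and $e^{i\pi\mathcal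 N_g}$ and commute with all ghost operators. Then $$G_0\,a_1\cdots a_n\,G_0=\frac{1}{L^{n/2}}\sum_{-\pi<p_1,\dots,p_n<\pi}W_1(p_1)\cdots W_n(p_n)\,\mathrm{Pf}\Bigl([\theta(p_i)\delta_{p_i,-p_j}]_{i<j}\Bigr)\,G_0,$$ where $[M(i,j)]_{i<j}$ denotes the skew-symmetric $n\times n$ matrix whose upper triangular entries are $M(i,j)$, $\theta$ is the Heaviside step function, $\delta$ is the Kronecker delta, and $G_0\equiv\prod_{0<k<\pi}g_kg^\dagger_k$ is the projector on the ghost vacuum.
   Context: Setting: time evolution after a quench $h_0\to h$ of the transverse field in the periodic transverse-field Ising chain, starting from the ground state at $h_0$. The time-averaged (diagonal, "pair") ensemble is $\rho_{PE}=\prod_{0<k}g_kg^\dagger_k\exp\bigl(\sum_{0<p}\log K^2(p)\,d^\dagger_pd_p-\log(1+K^2(p))\bigr)$, i.e. the ghost-vacuum projector times a Gaussian state of pair fermions. Local spin operators are strings of Jordan–Wigner Majorana fermions $a_{2\ell}=\prod_{j<\ell}\sigma^z_j\sigma^x_\ell$, $a_{2\ell-1}=\prod_{j<\ell}\sigma^z_j\sigma^y_\ell$, which are linear in the $\alpha$'s and hence linear in the ghost operators. *)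

theory Defs
  imports "HOL-Combinatorics.Permutations" Complex_Main
begin

definition ns_momenta :: "nat \<Rightarrow> real set" where
  "ns_momenta L = {p. \<exists>n::int. p = 2 * pi * (real_of_int n + 1/2) / real L}"

definition pos_momenta :: "nat \<Rightarrow> real set" where
  "pos_momenta L = {p \<in> ns_momenta L. 0 < p \<and> p < pi}"

definition all_momenta :: "nat \<Rightarrow> real set" where
  "all_momenta L = {p \<in> ns_momenta L. - pi < p \<and> p < pi}"

definition heaviside :: "real \<Rightarrow> real" where
  "heaviside x = (if 0 < x then 1 else 0)"

definition kdelta :: "real \<Rightarrow> real \<Rightarrow> real" where
  "kdelta x y = (if x = y then 1 else 0)"

definition pfaffian :: "nat \<Rightarrow> (nat \<Rightarrow> nat \<Rightarrow> real) \<Rightarrow> real" where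
  "pfaffian n A =
     (if odd n then 0
      else (\<Sum>\<sigma> | \<sigma> permutes {..<n}.
              of_int (sign \<sigma>) * (\<Prod>i<n div 2. A (\<sigma> (2*i)) (\<sigma> (2*i+1))))
           / (2 ^ (n div 2) * fact (n div 2)))"

definition skew_upper :: "(nat \<Rightarrow> nat \<Rightarrow> real) \<Rightarrow> nat \<Rightarrow> nat \<Rightarrow> real" where
  "skew_upper M i j = (if i < j then M i j else if j < i then - M j i else 0)"

text \<open>Ghost vacuum projector G0 = prod_{0<k<pi} g_k g_k^dagger (factors in increasing k;
  they commute pairwise anyway).\<close>
definition ghost_vacuum :: "nat \<Rightarrow> (real \<Rightarrow> 'a::monoid_mult) \<Rightarrow> ('a \<Rightarrow> 'a) \<Rightarrow> 'a" where
  "ghost_vacuum L g adj =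
     prod_list (map (\<lambda>k. g k * adj (g k)) (sorted_list_of_set (pos_momenta L)))"

definition is_adjoint :: "('a::real_algebra_1 \<Rightarrow> 'a) \<Rightarrow> bool" where
  "is_adjoint adj \<longleftrightarrow>
     (\<forall>x. adj (adj x) = x) \<and> (\<forall>x y. adj (x + y) = adj x + adj y) \<and>
     (\<forall>x y. adj (x * y) = adj y * adj x) \<and> (\<forall>r x. adj (r *\<^sub>R x) = r *\<^sub>R adj x) \<and>
     adj 1 = 1"

end

theory Submission
  imports Defs
begin


definition pfS :: "nat \<Rightarrow> (nat \<Rightarrow> nat \<Rightarrow> real) \<Rightarrow> real" where
  "pfS n A = (\<Sum>\<sigma> | \<sigma> permutes {..<n}.
              of_int (sign \<sigma>) * (\<Prod>i<n div 2. A (\<sigma> (2*i)) (\<sigma> (2*i+1))))"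

definition hh :: "nat \<Rightarrow> nat \<Rightarrow> nat" where
  "hh j k = (if k + 2 \<le> j then k + 1 else k + 2)"

definition bb :: "nat \<Rightarrow> nat \<Rightarrow> nat" where
  "bb j k = (if k = 1 then j else if 2 \<le> k \<and> k \<le> j then k - 1 else k)"

definition gg :: "nat \<Rightarrow> nat \<Rightarrow> nat" where
  "gg j v = (if v = j then 1 else if 1 \<le> v \<and> v < j then v + 1 else v)"

definition lift :: "nat \<Rightarrow> (nat \<Rightarrow> nat) \<Rightarrow> nat \<Rightarrow> nat" where
  "lift n \<rho> = (\<lambda>x. if x \<in> {2..<n+2} then \<rho> (x - 2) + 2 else x)"

lemma bb_Suc: "1 \<le> j \<Longrightarrow> bb (Suc j) = Transposition.transpose j (Suc j) \<circ> bb j"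
  by (rule ext) (auto simp: bb_def Transposition.transpose_def)

lemma bb_perm: "1 \<le> j \<Longrightarrow> j < N \<Longrightarrow> bb j permutes {..<N} \<and> sign (bb j) = (-1)^(j-1)"
proof (induction j rule: dec_induct)
  case base
  have "bb 1 = id" by (rule ext) (auto simp: bb_def)
  then show ?case using permutes_id[of "{..<N}"] by (simp add: id_def)
next
  case (step j)
  then have IH: "bb j permutes {..<N}" "sign (bb j) = (-1)^(j-1)" by auto
  have t: "Transposition.transpose j (Suc j) permutes {..<N}"
    using step by (intro permutes_swap_id) auto
  have "bb (Suc j) permutes {..<N}" unfolding bb_Suc[OF step(1)]
    by (rule permutes_compose[OF IH(1) t])
  moreover have "sign (bb (Suc j)) = (-1)^(Suc j - 1)"
    unfolding bb_Suc[OF step(1)]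
    apply (subst sign_compose)
      apply (rule permutation_swap_id)
     apply (rule permutes_imp_permutation[OF _ IH(1)], simp)
    using IH step(1) by (simp add: sign_swap_id) (cases j, auto)
  ultimately show ?case by simp
qed

lemma gg_bb: "1 \<le> j \<Longrightarrow> gg j (bb j x) = x"
  by (auto simp: gg_def bb_def)
lemma bb_gg: "1 \<le> j \<Longrightarrow> bb j (gg j x) = x"
  by (auto simp: gg_def bb_def)
lemma inj_gg: "1 \<le> j \<Longrightarrow> inj (gg j)"
  by (metis bb_gg injI)

lemma lift_perm:
  assumes "\<rho> permutes {..<n}"
  shows "lift n \<rho> permutes {..<n+2}" "sign (lift n \<rho>) = sign \<rho>"
proof -
  interpret permutes_bij_finite \<rho> "{..<n}" "{2..<n+2}" "\<lambda>x. x+2" "\<lambda>x. x-2" "lift n \<rho>"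
  proof unfold_locales
    show "lift n \<rho> \<equiv> \<lambda>x. if x \<in> {2..<n + 2} then \<rho> (x - 2) + 2 else x"
      by (simp add: lift_def)
    show "bij_betw (\<lambda>x. x + 2) {..<n} {2..<n + 2}"
      unfolding bij_betw_def inj_on_def image_def
    proof (auto)
      fix x assume "2 \<le> x" "x < Suc (Suc n)"
      then show "\<exists>xa\<in>{..<n}. x = Suc (Suc xa)" by (intro bexI[of _ "x - 2"]) auto
    qed
  qed (auto simp: assms)
  show "lift n \<rho> permutes {..<n+2}"
    using permutes_p' by (rule permutes_subset) auto
  show "sign (lift n \<rho>) = sign \<rho>"
    using sign_p' .
qed

definition TT :: "nat \<Rightarrow> (nat \<Rightarrow> nat \<Rightarrow> real) \<Rightarrow> (nat \<Rightarrow> nat) \<Rightarrow> real" where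
  "TT m A \<sigma> = of_int (sign \<sigma>) * (\<Prod>i<Suc m. A (\<sigma> (2*i)) (\<sigma> (2*i+1)))"

lemma pfS_TT: "pfS (2*m+2) A = (\<Sum>\<sigma> | \<sigma> permutes {..<2*m+2}. TT m A \<sigma>)"
  unfolding pfS_def TT_def by simp

lemma step1:
  "(\<Sum>\<sigma> | \<sigma> permutes {..<2*m+2}. TT m A \<sigma>) =
   (\<Sum>k<Suc m. \<Sum>\<sigma> | \<sigma> permutes {..<2*m+2}. if \<sigma> (2*k) = 0 \<or> \<sigma> (2*k+1) = 0 then TT m A \<sigma> else 0)"
proof -
  have "(\<Sum>k<Suc m. if \<sigma> (2*k) = 0 \<or> \<sigma> (2*k+1) = 0 then TT m A \<sigma> else 0) = TT m A \<sigma>"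
    if p: "\<sigma> permutes {..<2*m+2}" for \<sigma>
  proof -
    have "0 \<in> \<sigma> ` {..<2*m+2}" using permutes_image[OF p] by simp
    then obtain q where q: "q < 2*m+2" "\<sigma> q = 0" by auto
    have inj: "inj \<sigma>" using permutes_inj[OF p] .
    have "\<And>k. (\<sigma> (2*k) = 0 \<or> \<sigma> (2*k+1) = 0) \<longleftrightarrow> k = q div 2"
    proof -
      fix k
      have "(\<sigma> (2*k) = 0 \<or> \<sigma> (2*k+1) = 0) \<longleftrightarrow> (2*k = q \<or> 2*k+1 = q)"
        using inj q(2) by (metis injD)
      also have "\<dots> \<longleftrightarrow> k = q div 2" by auto
      finally show "(\<sigma> (2*k) = 0 \<or> \<sigma> (2*k+1) = 0) \<longleftrightarrow> k = q div 2" .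
    qed
    then have "(\<Sum>k<Suc m. if \<sigma> (2*k) = 0 \<or> \<sigma> (2*k+1) = 0 then TT m A \<sigma> else 0)
       = (\<Sum>k<Suc m. if k = q div 2 then TT m A \<sigma> else 0)" by simp
    also have "\<dots> = TT m A \<sigma>"
    proof -
      have "q div 2 < Suc m" using q(1) by presburger
      then show ?thesis by (simp add: sum.delta')
    qed
    finally show ?thesis .
  qed
  then show ?thesis
    by (subst sum.swap) (rule sum.cong[OF refl], simp)
qed

lemma tau_even: "(Transposition.transpose 0 (2*(k::nat)) \<circ> Transposition.transpose 1 (2*k+1)) (2*i)
     = 2 * Transposition.transpose 0 k i"
proof -
  have "2*i \<noteq> 2*k+1" "2*i \<noteq> 1" by presburger+
  then show ?thesis by (simp add: Transposition.transpose_def)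
qed
lemma tau_odd: "(Transposition.transpose 0 (2*(k::nat)) \<circ> Transposition.transpose 1 (2*k+1)) (2*i+1)
     = 2 * Transposition.transpose 0 k i + 1"
proof -
  have "2*i \<noteq> 2*k+1" "2*i+1 \<noteq> 2*k" "2*i+1\<noteq>0" by presburger+
  then show ?thesis by (simp add: Transposition.transpose_def)
qed

lemma step2:
  assumes k: "k < Suc m"
  shows "(\<Sum>\<sigma> | \<sigma> permutes {..<2*m+2}. if \<sigma> (2*k) = 0 \<or> \<sigma> (2*k+1) = 0 then TT m A \<sigma> else 0)
       = (\<Sum>\<sigma> | \<sigma> permutes {..<2*m+2}. if \<sigma> 0 = 0 \<or> \<sigma> 1 = 0 then TT m A \<sigma> else 0)"
proof -
  define \<tau> where "\<tau> = Transposition.transpose 0 (2*k) \<circ> Transposition.transpose 1 (2*k+1)"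
  have tp: "\<tau> permutes {..<2*m+2}" unfolding \<tau>_def using k
    by (intro permutes_compose permutes_swap_id) auto
  have st: "sign \<tau> = 1" unfolding \<tau>_def
    by (subst sign_compose) (auto simp: permutation_swap_id sign_swap_id)
  have t0: "\<tau> (2*k) = 0" and t1: "\<tau> (2*k+1) = 1"
    using tau_even[of k k] tau_odd[of k k] unfolding \<tau>_def by auto
  have TT: "TT m A (\<sigma> \<circ> \<tau>) = TT m A \<sigma>" if p: "\<sigma> permutes {..<2*m+2}" for \<sigma>
  proof -
    have s1: "sign (\<sigma> \<circ> \<tau>) = sign \<sigma>"
      by (subst sign_compose) (auto simp: st intro: permutes_imp_permutation[OF _ p] permutes_imp_permutation[OF _ tp])
    have "(\<Prod>i<Suc m. A ((\<sigma> \<circ> \<tau>) (2*i)) ((\<sigma> \<circ> \<tau>) (2*i+1)))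
        = (\<Prod>i<Suc m. A (\<sigma> (2*Transposition.transpose 0 k i)) (\<sigma> (2*Transposition.transpose 0 k i+1)))"
      using tau_even[of k] tau_odd[of k] unfolding \<tau>_def by (simp only: o_apply)
    also have "\<dots> = (\<Prod>i<Suc m. A (\<sigma> (2*i)) (\<sigma> (2*i+1)))"
      using prod.permute[of "Transposition.transpose 0 k" "{..<Suc m}" "\<lambda>i. A (\<sigma> (2*i)) (\<sigma> (2*i+1))"] k
      by (simp add: permutes_swap_id o_def)
    finally show ?thesis unfolding TT_def using s1 by simp
  qed
  show ?thesis
    apply (subst sum_permutations_compose_right[OF tp])
    apply (rule sum.cong[OF refl])
    using TT t0 t1 by auto
qed

lemma step3:
  assumes skew: "\<And>i j. A i j = - A j i"
  shows "(\<Sum>\<sigma> | \<sigma> permutes {..<2*m+2}. if \<sigma> 0 = 0 \<or> \<sigma> 1 = 0 then TT m A \<sigma> else 0)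
       = 2 * (\<Sum>\<sigma> | \<sigma> permutes {..<2*m+2}. if \<sigma> 0 = 0 then TT m A \<sigma> else 0)"
proof -
  define t where "t = Transposition.transpose (0::nat) 1"
  have tp: "t permutes {..<2*m+2}" unfolding t_def by (intro permutes_swap_id) auto
  have split: "(if \<sigma> 0 = 0 \<or> \<sigma> 1 = 0 then TT m A \<sigma> else 0)
     = (if \<sigma> 0 = 0 then TT m A \<sigma> else 0) + (if \<sigma> 1 = 0 then TT m A \<sigma> else 0)"
    if p: "\<sigma> permutes {..<2*m+2}" for \<sigma>
  proof -
    have "\<not> (\<sigma> 0 = 0 \<and> \<sigma> 1 = 0)" using permutes_inj[OF p] by (metis injD zero_neq_one)
    then show ?thesis by auto
  qed
  have TT: "TT m A (\<sigma> \<circ> t) = TT m A \<sigma>" if p: "\<sigma> permutes {..<2*m+2}" for \<sigma>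
  proof -
    have "sign (\<sigma> \<circ> t) = - sign \<sigma>"
      by (subst sign_compose) (auto simp: t_def sign_swap_id intro: permutes_imp_permutation[OF _ p] permutation_swap_id)
    moreover have "(\<Prod>i<Suc m. A ((\<sigma> \<circ> t) (2*i)) ((\<sigma> \<circ> t) (2*i+1)))
        = - (\<Prod>i<Suc m. A (\<sigma> (2*i)) (\<sigma> (2*i+1)))"
      unfolding prod.lessThan_Suc_shift by (simp add: t_def skew[of "\<sigma> (Suc 0)" "\<sigma> 0"])
    ultimately show ?thesis unfolding TT_def by simp
  qed
  have "(\<Sum>\<sigma> | \<sigma> permutes {..<2*m+2}. if \<sigma> 1 = 0 then TT m A \<sigma> else 0)
      = (\<Sum>\<sigma> | \<sigma> permutes {..<2*m+2}. if \<sigma> 0 = 0 then TT m A \<sigma> else 0)"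
    apply (subst sum_permutations_compose_right[OF tp])
    apply (rule sum.cong[OF refl])
    using TT by (auto simp: t_def)
  moreover have "(\<Sum>\<sigma> | \<sigma> permutes {..<2*m+2}. if \<sigma> 0 = 0 \<or> \<sigma> 1 = 0 then TT m A \<sigma> else 0)
     = (\<Sum>\<sigma> | \<sigma> permutes {..<2*m+2}. if \<sigma> 0 = 0 then TT m A \<sigma> else 0)
       + (\<Sum>\<sigma> | \<sigma> permutes {..<2*m+2}. if \<sigma> 1 = 0 then TT m A \<sigma> else 0)"
    by (subst sum.distrib[symmetric]) (rule sum.cong[OF refl], rule split, simp)
  ultimately show ?thesis by simp
qed

lemma step4a:
  "(\<Sum>\<sigma> | \<sigma> permutes {..<2*m+2}. if \<sigma> 0 = 0 then TT m A \<sigma> else 0)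
   = (\<Sum>j\<in>{1..2*m+1}. \<Sum>\<sigma> | \<sigma> permutes {..<2*m+2}. if \<sigma> 0 = 0 \<and> \<sigma> 1 = j then TT m A \<sigma> else 0)"
proof -
  have "(\<Sum>j\<in>{1..2*m+1}. if \<sigma> 0 = 0 \<and> \<sigma> 1 = j then TT m A \<sigma> else 0)
       = (if \<sigma> 0 = 0 then TT m A \<sigma> else 0)"
    if p: "\<sigma> permutes {..<2*m+2}" for \<sigma>
  proof (cases "\<sigma> 0 = 0")
    case True
    have "\<sigma> 1 \<noteq> 0" using True permutes_inj[OF p] by (metis injD zero_neq_one)
    moreover have "\<sigma> 1 < 2*m+2" using permutes_in_image[OF p, of 1] by simp
    ultimately have "\<sigma> 1 \<in> {1..2*m+1}" by auto
    then show ?thesis using True by (simp add: sum.delta)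
  qed simp
  then show ?thesis
    by (subst sum.swap) (rule sum.cong[OF refl], simp)
qed

lemma bb_hh: "bb j (y + 2) = hh j y"
  by (simp add: bb_def hh_def)

lemma step4b:
  assumes j: "1 \<le> j" "j \<le> 2*m+1"
  shows "(\<Sum>\<sigma> | \<sigma> permutes {..<2*m+2}. if \<sigma> 0 = 0 \<and> \<sigma> 1 = j then TT m A \<sigma> else 0)
     = (-1)^(j-1) * A 0 j * pfS (2*m) (\<lambda>a b. A (hh j a) (hh j b))"
proof -
  define n where "n = 2*m"
  define N where "N = 2*m+2"
  define Phi where "Phi = (\<lambda>\<rho>. bb j \<circ> lift n \<rho>)"
  define Psi where "Psi = (\<lambda>\<sigma> k. if k < n then gg j (\<sigma> (k+2)) - 2 else k)"
  define T where "T = {\<sigma>. \<sigma> permutes {..<N} \<and> \<sigma> 0 = 0 \<and> \<sigma> 1 = j}"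
  have jN: "j < N" using j unfolding N_def by simp
  have bbp: "bb j permutes {..<N}" "sign (bb j) = (-1)^(j-1)" using bb_perm[OF j(1) jN] by auto
  have nN: "N = n + 2" unfolding n_def N_def by simp
  have lhs: "(\<Sum>\<sigma> | \<sigma> permutes {..<2*m+2}. if \<sigma> 0 = 0 \<and> \<sigma> 1 = j then TT m A \<sigma> else 0)
      = sum (TT m A) T"
    unfolding T_def N_def
    by (subst sum.inter_filter[symmetric]) (auto simp: finite_permutations)
  have a: "Psi (Phi \<rho>) = \<rho>" if p: "\<rho> permutes {..<n}" for \<rho>
  proof
    fix k show "Psi (Phi \<rho>) k = \<rho> k"
    proof (cases "k < n")
      case True
      have "\<rho> k < n" using permutes_in_image[OF p] True by simp
      then show ?thesis using True j by (simp add: Psi_def Phi_def lift_def gg_bb)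
    next
      case False
      then show ?thesis using permutes_not_in[OF p, of k] by (simp add: Psi_def)
    qed
  qed
  have b: "Phi \<rho> \<in> T" if p: "\<rho> permutes {..<n}" for \<rho>
  proof -
    have "Phi \<rho> permutes {..<N}" unfolding Phi_def nN
      by (rule permutes_compose[OF lift_perm(1)[OF p] bbp(1)[unfolded nN]])
    then show ?thesis unfolding T_def Phi_def by (simp add: lift_def bb_def)
  qed
  have c: "Phi (Psi \<sigma>) = \<sigma>" and d: "Psi \<sigma> permutes {..<n}" if s: "\<sigma> \<in> T" for \<sigma>
  proof -
    have p: "\<sigma> permutes {..<N}" and s0: "\<sigma> 0 = 0" and s1: "\<sigma> 1 = j" using s unfolding T_def by auto
    have inj: "inj \<sigma>" using permutes_inj[OF p] .
    have rng: "2 \<le> gg j (\<sigma> x) \<and> gg j (\<sigma> x) < N" if x: "2 \<le> x" "x < N" for x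
    proof -
      have "\<sigma> x \<noteq> 0" using s0 inj x by (metis injD not_numeral_le_zero)
      moreover have "\<sigma> x \<noteq> j" using s1 inj x by (metis injD numeral_le_one_iff semiring_norm(69))
      moreover have "\<sigma> x < N" using permutes_in_image[OF p] x by simp
      ultimately show ?thesis using jN j unfolding gg_def by auto
    qed
    show "Phi (Psi \<sigma>) = \<sigma>"
    proof
      fix x
      consider "x = 0" | "x = 1" | "2 \<le> x \<and> x < N" | "N \<le> x" by linarith
      then show "Phi (Psi \<sigma>) x = \<sigma> x"
      proof cases
        case 1 then show ?thesis using s0 by (simp add: Phi_def lift_def bb_def)
      next
        case 2 then show ?thesis using s1 by (simp add: Phi_def lift_def bb_def)
      next
        case 3
        then obtain y where y: "x = y + 2" "y < n" using nN by (metis add.commute le_Suc_ex add_less_cancel_left)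
        then have "Psi \<sigma> (x - 2) + 2 = gg j (\<sigma> x)" using rng[of x] 3 by (simp add: Psi_def) arith
        then show ?thesis using 3 nN j by (simp add: Phi_def lift_def bb_gg)
      next
        case 4
        then have "\<sigma> x = x" using permutes_not_in[OF p, of x] by simp
        then show ?thesis using 4 nN jN by (simp add: Phi_def lift_def bb_def)
      qed
    qed
    show "Psi \<sigma> permutes {..<n}"
    proof (rule bij_imp_permutes)
      have sub: "Psi \<sigma> ` {..<n} \<subseteq> {..<n}"
      proof
        fix y assume "y \<in> Psi \<sigma> ` {..<n}"
        then obtain k where k: "k < n" "y = Psi \<sigma> k" by auto
        then show "y \<in> {..<n}" using rng[of "k+2"] nN by (simp add: Psi_def) arith
      qed
      have "inj_on (Psi \<sigma>) {..<n}"
      proof (rule inj_onI)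
        fix k l assume kl: "k \<in> {..<n}" "l \<in> {..<n}" "Psi \<sigma> k = Psi \<sigma> l"
        then have "gg j (\<sigma> (k+2)) = gg j (\<sigma> (l+2))"
          using rng[of "k+2"] rng[of "l+2"] nN by (simp add: Psi_def) arith
        then have "\<sigma> (k+2) = \<sigma> (l+2)" using inj_gg[OF j(1)] by (simp add: inj_eq)
        then show "k = l" using inj by (simp add: inj_eq)
      qed
      then show "bij_betw (Psi \<sigma>) {..<n} {..<n}"
        using endo_inj_surj[OF _ sub] by (simp add: bij_betw_def)
      show "Psi \<sigma> x = x" if "x \<notin> {..<n}" for x using that by (simp add: Psi_def)
    qed
  qed
  have e: "TT m A (Phi \<rho>) = (-1)^(j-1) * A 0 j *
      (of_int (sign \<rho>) * (\<Prod>i<m. A (hh j (\<rho> (2*i))) (hh j (\<rho> (2*i+1)))))"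
    if p: "\<rho> permutes {..<n}" for \<rho>
  proof -
    have sg: "sign (Phi \<rho>) = (-1)^(j-1) * sign \<rho>"
      unfolding Phi_def
      apply (subst sign_compose)
        apply (rule permutes_imp_permutation[OF _ bbp(1)], simp)
       apply (rule permutes_imp_permutation[OF _ lift_perm(1)[OF p]], simp)
      using bbp(2) lift_perm(2)[OF p] by simp
    have ev: "Phi \<rho> (Suc (Suc (2*i))) = hh j (\<rho> (2*i))" "Phi \<rho> (Suc (Suc (Suc (2*i)))) = hh j (\<rho> (Suc (2*i)))"
      if "i < m" for i
    proof -
      have "2*i < n" "2*i+1 < n" using that n_def by auto
      then have "\<rho> (2*i) < n" "\<rho> (2*i+1) < n" using permutes_in_image[OF p] by auto
      then show "Phi \<rho> (Suc (Suc (2*i))) = hh j (\<rho> (2*i))" "Phi \<rho> (Suc (Suc (Suc (2*i)))) = hh j (\<rho> (Suc (2*i)))"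
        using \<open>2*i < n\<close> \<open>2*i+1 < n\<close>
        by (simp_all add: Phi_def lift_def bb_hh[symmetric] add.commute)
    qed
    have "(\<Prod>i<Suc m. A (Phi \<rho> (2*i)) (Phi \<rho> (2*i+1)))
        = A (Phi \<rho> 0) (Phi \<rho> 1) * (\<Prod>i<m. A (Phi \<rho> (2*Suc i)) (Phi \<rho> (2*Suc i+1)))"
      by (subst prod.lessThan_Suc_shift) simp
    also have "\<dots> = A 0 j * (\<Prod>i<m. A (hh j (\<rho> (2*i))) (hh j (\<rho> (2*i+1))))"
    proof -
      have "(\<Prod>i<m. A (Phi \<rho> (2*Suc i)) (Phi \<rho> (2*Suc i+1)))
          = (\<Prod>i<m. A (hh j (\<rho> (2*i))) (hh j (\<rho> (2*i+1))))"
        by (rule prod.cong[OF refl]) (simp add: ev)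
      moreover have "Phi \<rho> 0 = 0" "Phi \<rho> 1 = j" using b[OF p] unfolding T_def by auto
      ultimately show ?thesis by simp
    qed
    finally show ?thesis unfolding TT_def sg by simp
  qed
  have "sum (TT m A) T = (\<Sum>\<rho> | \<rho> permutes {..<n}. (-1)^(j-1) * A 0 j *
      (of_int (sign \<rho>) * (\<Prod>i<m. A (hh j (\<rho> (2*i))) (hh j (\<rho> (2*i+1))))))"
    by (rule sum.reindex_bij_witness[of _ Psi Phi, symmetric]) (use a b c d e in auto)
  also have "\<dots> = (-1)^(j-1) * A 0 j * pfS (2*m) (\<lambda>a b. A (hh j a) (hh j b))"
    unfolding pfS_def n_def by (simp add: sum_distrib_left)
  finally show ?thesis using lhs by simp
qed

lemma pfS_rec:
  assumes skew: "\<And>i j. A i j = - A j i"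
  shows "pfS (2*m+2) A = 2 * (real m + 1) *
    (\<Sum>j\<in>{1..2*m+1}. (-1)^(j-1) * A 0 j * pfS (2*m) (\<lambda>a b. A (hh j a) (hh j b)))"
proof -
  have "pfS (2*m+2) A = (\<Sum>k<Suc m. \<Sum>\<sigma> | \<sigma> permutes {..<2*m+2}. if \<sigma> (2*k) = 0 \<or> \<sigma> (2*k+1) = 0 then TT m A \<sigma> else 0)"
    by (simp only: pfS_TT step1)
  also have "\<dots> = (\<Sum>k<Suc m. \<Sum>\<sigma> | \<sigma> permutes {..<2*m+2}. if \<sigma> 0 = 0 \<or> \<sigma> 1 = 0 then TT m A \<sigma> else 0)"
    by (rule sum.cong[OF refl]) (rule step2, simp)
  also have "\<dots> = (real m + 1) * (\<Sum>\<sigma> | \<sigma> permutes {..<2*m+2}. if \<sigma> 0 = 0 \<or> \<sigma> 1 = 0 then TT m A \<sigma> else 0)"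
    by simp
  also have "\<dots> = (real m + 1) * (2 * (\<Sum>j\<in>{1..2*m+1}. \<Sum>\<sigma> | \<sigma> permutes {..<2*m+2}. if \<sigma> 0 = 0 \<and> \<sigma> 1 = j then TT m A \<sigma> else 0))"
    by (simp only: step3[OF skew] step4a)
  also have "\<dots> = (real m + 1) * (2 * (\<Sum>j\<in>{1..2*m+1}. (-1)^(j-1) * A 0 j * pfS (2*m) (\<lambda>a b. A (hh j a) (hh j b))))"
    by (subst sum.cong[OF refl step4b]) auto
  finally show ?thesis by (simp only: mult_ac)
qed

lemma pf_rec:
  assumes skew: "\<And>i j. A i j = - A j i"
  shows "pfaffian (n+2) A =
    (\<Sum>j\<in>{1..n+1}. (-1)^(j-1) * A 0 j * pfaffian n (\<lambda>a b. A (hh j a) (hh j b)))"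
proof (cases "odd n")
  case True
  then show ?thesis by (simp add: pfaffian_def)
next
  case False
  then obtain m where n: "n = 2*m" by (metis evenE)
  have l: "pfaffian (n+2) A = pfS (2*m+2) A / (2^(m+1) * fact (m+1))"
    unfolding pfaffian_def pfS_def n by simp
  have r: "pfaffian (2*m) B = pfS (2*m) B / (2^m * fact m)" for B
    unfolding pfaffian_def pfS_def by simp
  have "pfaffian (n+2) A = (\<Sum>j\<in>{1..2*m+1}. (-1)^(j-1) * A 0 j * pfS (2*m) (\<lambda>a b. A (hh j a) (hh j b)))
       * (2 * (real m + 1) / (2^(m+1) * fact (m+1)))"
    unfolding l pfS_rec[OF skew] by simp
  also have "2 * (real m + 1) / (2^(m+1) * fact (m+1)) = 1 / (2^m * fact m)"
  proof -
    have e: "(2::real)^(m+1) * fact (m+1) = (2*(real m+1)) * (2^m * fact m)"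
      by (simp add: fact_Suc algebra_simps)
    have "(2::real)*(real m+1) \<noteq> 0" by simp
    then show ?thesis unfolding e by simp
  qed
  finally have "pfaffian (n+2) A = (\<Sum>j\<in>{1..2*m+1}. (-1)^(j-1) * A 0 j * pfS (2*m) (\<lambda>a b. A (hh j a) (hh j b)) / (2^m * fact m))"
    unfolding sum_divide_distrib[symmetric] by simp
  then show ?thesis unfolding n r by simp
qed

lemma pf_cong:
  assumes "\<And>i j. i < n \<Longrightarrow> j < n \<Longrightarrow> A i j = B i j"
  shows "pfaffian n A = pfaffian n B"
proof -
  have "(\<Prod>i<n div 2. A (\<sigma> (2*i)) (\<sigma> (2*i+1))) = (\<Prod>i<n div 2. B (\<sigma> (2*i)) (\<sigma> (2*i+1)))"
    if p: "\<sigma> permutes {..<n}" for \<sigma>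
  proof (rule prod.cong[OF refl])
    fix i assume "i \<in> {..<n div 2}"
    then have "2*i < n" "2*i+1 < n" by auto
    then show "A (\<sigma> (2*i)) (\<sigma> (2*i+1)) = B (\<sigma> (2*i)) (\<sigma> (2*i+1))"
      using permutes_in_image[OF p] assms by auto
  qed
  then have "(\<Sum>\<sigma> | \<sigma> permutes {..<n}. of_int (sign \<sigma>) * (\<Prod>i<n div 2. A (\<sigma> (2*i)) (\<sigma> (2*i+1))))
     = (\<Sum>\<sigma> | \<sigma> permutes {..<n}. of_int (sign \<sigma>) * (\<Prod>i<n div 2. B (\<sigma> (2*i)) (\<sigma> (2*i+1))))"
    by (intro sum.cong refl) simp
  then show ?thesis unfolding pfaffian_def by simp
qed

lemma pf0: "pfaffian 0 A = 1"
  by (simp add: pfaffian_def)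

lemma pf1: "pfaffian 1 A = 0"
  by (simp add: pfaffian_def)



lemma ineqA: "(L::real) > 0 \<Longrightarrow> - pi < 2 * pi * x / L \<Longrightarrow> - L < 2 * x"
proof -
  assume L: "L > 0" and h: "- pi < 2 * pi * x / L"
  then have "- pi * L < 2 * pi * x" by (simp add: less_divide_eq)
  then have "pi * (- L) < pi * (2 * x)" by (simp add: algebra_simps)
  then show ?thesis using pi_gt_zero by (simp only: mult_less_cancel_left_pos)
qed
lemma ineqB: "(L::real) > 0 \<Longrightarrow> 2 * pi * x / L < pi \<Longrightarrow> 2 * x < L"
proof -
  assume L: "L > 0" and h: "2 * pi * x / L < pi"
  then have "2 * pi * x < pi * L" by (simp add: divide_less_eq)
  then have "pi * (2 * x) < pi * L" by (simp add: algebra_simps)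
  then show ?thesis using pi_gt_zero by (simp only: mult_less_cancel_left_pos)
qed

lemma ns_neg: "p \<in> ns_momenta L \<Longrightarrow> - p \<in> ns_momenta L"
proof -
  assume "p \<in> ns_momenta L"
  then obtain n :: int where n: "p = 2 * pi * (real_of_int n + 1/2) / real L"
    unfolding ns_momenta_def by auto
  have e: "real_of_int (- n - 1) + 1/2 = - (real_of_int n + 1/2)" by simp
  have "- p = 2 * pi * (real_of_int (- n - 1) + 1/2) / real L"
    unfolding n e by (simp only: minus_divide_left mult_minus_right)
  then show ?thesis unfolding ns_momenta_def by blast
qed

lemma ns_nz: "0 < L \<Longrightarrow> p \<in> ns_momenta L \<Longrightarrow> p \<noteq> 0"
proof -
  assume L: "0 < L" and "p \<in> ns_momenta L"
  then obtain n :: int where n: "p = 2 * pi * (real_of_int n + 1/2) / real L"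
    unfolding ns_momenta_def by auto
  have "real_of_int n + 1/2 \<noteq> 0"
  proof
    assume "real_of_int n + 1/2 = 0"
    then have "real_of_int (2*n + 1) = 0" by simp
    then have "2*n+1 = 0" by (simp only: of_int_eq_0_iff)
    then show False by presburger
  qed
  then show ?thesis unfolding n using L by simp
qed

lemma all_cases:
  assumes "0 < L" "p \<in> all_momenta L"
  shows "(0 < p \<and> p \<in> pos_momenta L) \<or> (p < 0 \<and> - p \<in> pos_momenta L)"
proof -
  have "p \<noteq> 0" using ns_nz assms unfolding all_momenta_def by auto
  then show ?thesis using assms ns_neg[of p L] unfolding all_momenta_def pos_momenta_def by auto
qed

lemma pos_all: "p \<in> pos_momenta L \<Longrightarrow> p \<in> all_momenta L \<and> - p \<in> all_momenta L"
  using ns_neg[of p L] unfolding all_momenta_def pos_momenta_def by auto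

lemma all_eq: "0 < L \<Longrightarrow> all_momenta L = pos_momenta L \<union> uminus ` pos_momenta L"
proof
  assume L: "0 < L"
  show "all_momenta L \<subseteq> pos_momenta L \<union> uminus ` pos_momenta L"
  proof
    fix p assume "p \<in> all_momenta L"
    then show "p \<in> pos_momenta L \<union> uminus ` pos_momenta L"
      using all_cases[OF L] by (metis UnI1 UnI2 image_eqI minus_minus)
  qed
  show "pos_momenta L \<union> uminus ` pos_momenta L \<subseteq> all_momenta L"
    using pos_all by auto
qed

lemma finite_all: "0 < L \<Longrightarrow> finite (all_momenta L)"
proof -
  assume L: "0 < L"
  have "all_momenta L \<subseteq> (\<lambda>n::int. 2 * pi * (real_of_int n + 1/2) / real L) ` {-int L..int L}"
  proof
    fix p assume "p \<in> all_momenta L"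
    then obtain n :: int where n: "p = 2 * pi * (real_of_int n + 1/2) / real L" and b: "- pi < p" "p < pi"
      unfolding all_momenta_def ns_momenta_def by auto
    have Lr: "real L > 0" using L by simp
    have "2 * (real_of_int n + 1/2) < real L" using ineqB[OF Lr] b(2) unfolding n by blast
    then have "real_of_int n \<le> real_of_int (int L)" by simp
    then have u: "n \<le> int L" by (simp only: of_int_le_iff)
    have "- real L < 2 * (real_of_int n + 1/2)" using ineqA[OF Lr] b(1) unfolding n by blast
    moreover have "real L \<ge> 1" using L by simp
    ultimately have "real_of_int (- int L) \<le> real_of_int n" by simp
    then have l: "- int L \<le> n" by (simp only: of_int_le_iff)
    show "p \<in> (\<lambda>n::int. 2 * pi * (real_of_int n + 1/2) / real L) ` {-int L..int L}"
      using u l n by auto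
  qed
  then show ?thesis by (rule finite_subset) simp
qed

lemma finite_pos: "0 < L \<Longrightarrow> finite (pos_momenta L)"
  using finite_all by (rule finite_subset[rotated]) (use pos_all in auto)

lemma comm_prod_list:
  fixes x :: "'a::monoid_mult"
  assumes "\<And>y. y \<in> set ys \<Longrightarrow> x * y = y * x"
  shows "x * prod_list ys = prod_list ys * x"
  using assms
proof (induction ys)
  case Nil then show ?case by simp
next
  case (Cons y ys)
  have "x * prod_list (y # ys) = (x * y) * prod_list ys" by (simp add: mult.assoc)
  also have "\<dots> = y * (x * prod_list ys)" using Cons.prems by (simp add: mult.assoc)
  also have "\<dots> = y * (prod_list ys * x)" using Cons by simp
  finally show ?case by (simp add: mult.assoc)
qed

definition del :: "nat \<Rightarrow> 'b list \<Rightarrow> 'b list" where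
  "del j xs = take j xs @ drop (Suc j) xs"

lemma del_0 [simp]: "del 0 (y # ys) = ys" by (simp add: del_def)
lemma del_Suc [simp]: "del (Suc j) (y # ys) = y # del j ys" by (simp add: del_def)
lemma length_del: "j < length xs \<Longrightarrow> length (del j xs) = length xs - 1"
  by (simp add: del_def)
lemma set_del: "set (del j xs) \<subseteq> set xs"
  unfolding del_def using set_take_subset set_drop_subset by fastforce
lemma nth_del: "j < length xs \<Longrightarrow> a < length xs - 1 \<Longrightarrow>
   del j xs ! a = (if a < j then xs ! a else xs ! Suc a)"
  by (simp add: del_def nth_append min_def)

locale ghost =
  fixes L :: nat and g :: "real \<Rightarrow> 'a::real_algebra_1" and adj :: "'a \<Rightarrow> 'a"
  assumes L_pos: "0 < L"
    and adj: "is_adjoint adj"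
    and car_gg: "\<And>p q. p \<in> pos_momenta L \<Longrightarrow> q \<in> pos_momenta L \<Longrightarrow>
                   g p * g q + g q * g p = 0"
    and car_ggd: "\<And>p q. p \<in> pos_momenta L \<Longrightarrow> q \<in> pos_momenta L \<Longrightarrow>
                   g p * adj (g q) + adj (g q) * g p = (if p = q then 1 else 0)"
begin

abbreviation "pos \<equiv> pos_momenta L"
abbreviation "all \<equiv> all_momenta L"

definition c :: "real \<Rightarrow> 'a" where
  "c y = (if 0 < y then g y else adj (g (- y)))"

definition f :: "real \<Rightarrow> 'a" where
  "f k = g k * adj (g k)"

abbreviation "G0 \<equiv> ghost_vacuum L g adj"

lemma adj_add: "adj (x + y) = adj x + adj y" using adj unfolding is_adjoint_def by blast
lemma adj_mult: "adj (x * y) = adj y * adj x" using adj unfolding is_adjoint_def by blast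
lemma adj_0: "adj 0 = 0"
proof -
  have "adj (0 + 0) = adj 0 + adj 0" by (rule adj_add)
  then show ?thesis by simp
qed

lemma double0: "(x::'a) + x = 0 \<Longrightarrow> x = 0"
proof -
  assume "x + x = 0"
  then have "(2::real) *\<^sub>R x = 0" by (simp add: scaleR_2)
  then show "x = 0" by simp
qed

lemma gg0: "q \<in> pos \<Longrightarrow> g q * g q = 0"
  using car_gg[of q q] double0 by blast

lemma gdgd0: "q \<in> pos \<Longrightarrow> adj (g q) * adj (g q) = 0"
  using arg_cong[OF gg0, of q adj] by (simp add: adj_mult adj_0)

lemma anti_gg: "p \<in> pos \<Longrightarrow> q \<in> pos \<Longrightarrow> g p * g q = - (g q * g p)"
  using car_gg[of p q] by (simp only: add_eq_0_iff2)

lemma anti_gdgd: "p \<in> pos \<Longrightarrow> q \<in> pos \<Longrightarrow> adj (g p) * adj (g q) = - (adj (g q) * adj (g p))"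
proof -
  assume "p \<in> pos" "q \<in> pos"
  then have "adj (g q * g p + g p * g q) = 0" using car_gg[of q p] adj_0 by simp
  then have "adj (g p) * adj (g q) + adj (g q) * adj (g p) = 0" by (simp add: adj_add adj_mult)
  then show ?thesis by (simp only: add_eq_0_iff2)
qed

lemma anti_ggd: "p \<in> pos \<Longrightarrow> q \<in> pos \<Longrightarrow> p \<noteq> q \<Longrightarrow> g p * adj (g q) = - (adj (g q) * g p)"
proof -
  assume "p \<in> pos" "q \<in> pos" "p \<noteq> q"
  then have "g p * adj (g q) + adj (g q) * g p = 0" using car_ggd[of p q] by simp
  then show ?thesis by (simp only: add_eq_0_iff2)
qed

lemma anti_gdg: "p \<in> pos \<Longrightarrow> q \<in> pos \<Longrightarrow> p \<noteq> q \<Longrightarrow> adj (g p) * g q = - (g q * adj (g p))"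
proof -
  assume "p \<in> pos" "q \<in> pos" "p \<noteq> q"
  then have "g q * adj (g p) + adj (g p) * g q = 0" using car_ggd[of q p] by simp
  then show ?thesis by (simp only: add_eq_0_iff)
qed

lemma g_f_comm: "k \<in> pos \<Longrightarrow> q \<in> pos \<Longrightarrow> k \<noteq> q \<Longrightarrow> g q * f k = f k * g q"
proof -
  assume a: "k \<in> pos" "q \<in> pos" "k \<noteq> q"
  have "g q * f k = (g q * g k) * adj (g k)" by (simp add: f_def mult.assoc)
  also have "\<dots> = - (g k * (g q * adj (g k)))" using anti_gg[of q k] a by (simp add: mult.assoc)
  also have "\<dots> = g k * (adj (g k) * g q)" using anti_ggd[of q k] a by simp
  finally show ?thesis by (simp add: f_def mult.assoc)
qed

lemma gd_f_comm: "k \<in> pos \<Longrightarrow> q \<in> pos \<Longrightarrow> k \<noteq> q \<Longrightarrow> adj (g q) * f k = f k * adj (g q)"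
proof -
  assume a: "k \<in> pos" "q \<in> pos" "k \<noteq> q"
  have "adj (g q) * f k = (adj (g q) * g k) * adj (g k)" by (simp add: f_def mult.assoc)
  also have "\<dots> = - (g k * (adj (g q) * adj (g k)))" using anti_gdg[of q k] a by (simp add: mult.assoc)
  also have "\<dots> = g k * (adj (g k) * adj (g q))" using anti_gdgd[of q k] a by simp
  finally show ?thesis by (simp add: f_def mult.assoc)
qed

lemma f_f_comm: "k \<in> pos \<Longrightarrow> q \<in> pos \<Longrightarrow> f q * f k = f k * f q"
proof (cases "k = q")
  case False
  assume a: "k \<in> pos" "q \<in> pos"
  have "f q * f k = g q * (adj (g q) * f k)" by (simp add: f_def mult.assoc)
  also have "\<dots> = f k * f q" using a False gd_f_comm[of k q] g_f_comm[of k q]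
    by (simp add: mult.assoc[symmetric]) (simp add: f_def mult.assoc)
  finally show ?thesis .
qed simp

lemma g_f_0: "q \<in> pos \<Longrightarrow> g q * f q = 0"
  by (simp add: f_def mult.assoc[symmetric] gg0)
lemma f_gd_0: "q \<in> pos \<Longrightarrow> f q * adj (g q) = 0"
  by (simp add: f_def mult.assoc gdgd0)
lemma f_idem: "q \<in> pos \<Longrightarrow> f q * f q = f q"
proof -
  assume q: "q \<in> pos"
  have "adj (g q) * g q = 1 - g q * adj (g q)" using car_ggd[of q q] q by (simp add: eq_diff_eq add.commute)
  have "f q * f q = g q * (adj (g q) * g q) * adj (g q)" by (simp add: f_def mult.assoc)
  also have "\<dots> = g q * (1 - g q * adj (g q)) * adj (g q)" using \<open>adj (g q) * g q = _\<close> by simp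
  also have "\<dots> = f q"
  proof -
    have gz: "g q * (g q * x) = 0" for x by (simp add: mult.assoc[symmetric] gg0[OF q])
    show ?thesis by (simp add: f_def algebra_simps gz)
  qed
  finally show ?thesis .
qed

definition ks :: "real list" where "ks = sorted_list_of_set pos"

lemma ks: "set ks = pos" "distinct ks"
  unfolding ks_def using finite_pos[OF L_pos] by auto

lemma G0_def': "G0 = prod_list (map f ks)"
  unfolding ghost_vacuum_def ks_def f_def ..

lemma gG: "q \<in> pos \<Longrightarrow> g q * G0 = 0"
proof -
  assume q: "q \<in> pos"
  then obtain us vs where s: "ks = us @ q # vs" using ks(1) by (metis split_list)
  have "q \<notin> set us" using ks(2) s by auto
  moreover have "set us \<subseteq> pos" using ks(1) s by auto
  ultimately have "g q * prod_list (map f us) = prod_list (map f us) * g q"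
    using q by (intro comm_prod_list) (auto intro: g_f_comm)
  then have "g q * G0 = prod_list (map f us) * (g q * f q) * prod_list (map f vs)"
    unfolding G0_def' s by (simp add: mult.assoc[symmetric])
  then show ?thesis using g_f_0[OF q] by simp
qed

lemma Ggd: "q \<in> pos \<Longrightarrow> G0 * adj (g q) = 0"
proof -
  assume q: "q \<in> pos"
  then obtain us vs where s: "ks = us @ q # vs" using ks(1) by (metis split_list)
  have "q \<notin> set vs" using ks(2) s by auto
  moreover have "set vs \<subseteq> pos" using ks(1) s by auto
  ultimately have "adj (g q) * prod_list (map f vs) = prod_list (map f vs) * adj (g q)"
    using q by (intro comm_prod_list) (auto intro: gd_f_comm)
  then have "G0 * adj (g q) = prod_list (map f us) * (f q * adj (g q)) * prod_list (map f vs)"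
    unfolding G0_def' s by (simp add: mult.assoc)
  then show ?thesis using f_gd_0[OF q] by simp
qed

lemma prod_f_idem: "set xs \<subseteq> pos \<Longrightarrow> distinct xs \<Longrightarrow>
   prod_list (map f xs) * prod_list (map f xs) = prod_list (map f xs)"
proof (induction xs)
  case Nil then show ?case by simp
next
  case (Cons x xs)
  have "f x * prod_list (map f xs) = prod_list (map f xs) * f x"
    using Cons.prems by (intro comm_prod_list) (auto intro: f_f_comm)
  have "prod_list (map f (x # xs)) * prod_list (map f (x # xs))
     = f x * (prod_list (map f xs) * f x) * prod_list (map f xs)"
    by (simp add: mult.assoc)
  also have "\<dots> = f x * (f x * prod_list (map f xs)) * prod_list (map f xs)"
    using \<open>f x * prod_list (map f xs) = prod_list (map f xs) * f x\<close> by (simp only:)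
  also have "\<dots> = (f x * f x) * (prod_list (map f xs) * prod_list (map f xs))"
    by (simp only: mult.assoc)
  finally have "prod_list (map f (x # xs)) * prod_list (map f (x # xs))
     = (f x * f x) * (prod_list (map f xs) * prod_list (map f xs))" .
  then show ?case using Cons f_idem[of x] by simp
qed

lemma GG: "G0 * G0 = G0"
  unfolding G0_def' using ks prod_f_idem by simp

lemma G_comm: "(\<And>k. k \<in> pos \<Longrightarrow> x * g k = g k * x \<and> x * adj (g k) = adj (g k) * x) \<Longrightarrow> x * G0 = G0 * x"
  unfolding G0_def'
proof (intro comm_prod_list)
  fix y assume a: "\<And>k. k \<in> pos \<Longrightarrow> x * g k = g k * x \<and> x * adj (g k) = adj (g k) * x"
    and y: "y \<in> set (map f ks)"
  then obtain k where k: "k \<in> pos" "y = f k" using ks(1) by auto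
  have "x * f k = (x * g k) * adj (g k)" by (simp add: f_def mult.assoc)
  also have "\<dots> = g k * (x * adj (g k))" using a[OF k(1)] by (simp add: mult.assoc)
  also have "\<dots> = f k * x" using a[OF k(1)] by (simp add: f_def mult.assoc)
  finally show "x * y = y * x" using k by simp
qed

lemma anti_c: "q \<in> pos \<Longrightarrow> y \<in> all \<Longrightarrow> g q * c y = kdelta q (- y) *\<^sub>R 1 - c y * g q"
proof -
  assume q: "q \<in> pos" and y: "y \<in> all"
  have qp: "q > 0" using q unfolding pos_momenta_def by auto
  from all_cases[OF L_pos y] show ?thesis
  proof
    assume a: "0 < y \<and> y \<in> pos"
    then have "kdelta q (- y) = 0" using qp by (simp add: kdelta_def)
    then show ?thesis using a anti_gg[OF q, of y] by (simp add: c_def)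
  next
    assume a: "y < 0 \<and> - y \<in> pos"
    have "g q * adj (g (- y)) + adj (g (- y)) * g q = kdelta q (- y) *\<^sub>R 1"
      using car_ggd[OF q, of "- y"] a by (simp add: kdelta_def)
    then show ?thesis using a by (simp add: c_def eq_diff_eq)
  qed
qed

lemma c_G: "y \<in> all \<Longrightarrow> 0 < y \<Longrightarrow> c y * G0 = 0"
  using all_cases[OF L_pos, of y] gG by (auto simp: c_def)

lemma G_c: "y \<in> all \<Longrightarrow> y < 0 \<Longrightarrow> G0 * c y = 0"
  using all_cases[OF L_pos, of y] Ggd by (auto simp: c_def)

lemma expand:
  assumes q: "q \<in> pos"
  shows "set ys \<subseteq> all \<Longrightarrow> g q * prod_list (map c ys) =
    (\<Sum>j<length ys. ((-1)^j * kdelta q (- (ys ! j))) *\<^sub>R prod_list (map c (del j ys)))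
    + ((-1)^length ys) *\<^sub>R (prod_list (map c ys) * g q)"
proof (induction ys)
  case Nil then show ?case by simp
next
  case (Cons y ys)
  let ?P = "prod_list (map c ys)"
  let ?S = "\<Sum>j<length ys. ((-1)^j * kdelta q (- (ys ! j))) *\<^sub>R prod_list (map c (del j ys))"
  have y: "y \<in> all" and IH: "g q * ?P = ?S + ((-1)^length ys) *\<^sub>R (?P * g q)"
    using Cons by auto
  have "g q * prod_list (map c (y # ys)) = (g q * c y) * ?P" by (simp add: mult.assoc)
  also have "\<dots> = kdelta q (- y) *\<^sub>R ?P - c y * (g q * ?P)"
    unfolding anti_c[OF q y] by (simp add: algebra_simps)
  also have "\<dots> = kdelta q (- y) *\<^sub>R ?P - c y * ?S - ((-1)^length ys) *\<^sub>R (c y * ?P * g q)"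
    unfolding IH by (simp add: algebra_simps)
  also have "c y * ?S = (\<Sum>j<length ys. ((-1)^j * kdelta q (- (ys ! j))) *\<^sub>R (c y * prod_list (map c (del j ys))))"
    by (simp add: sum_distrib_left)
  finally have e: "g q * prod_list (map c (y # ys)) = kdelta q (- y) *\<^sub>R ?P
     - (\<Sum>j<length ys. ((-1)^j * kdelta q (- (ys ! j))) *\<^sub>R (c y * prod_list (map c (del j ys))))
     - ((-1)^length ys) *\<^sub>R (c y * ?P * g q)" .
  have s: "(\<Sum>j<length (y # ys). ((-1)^j * kdelta q (- ((y # ys) ! j))) *\<^sub>R prod_list (map c (del j (y # ys))))
     = kdelta q (- y) *\<^sub>R ?P
     - (\<Sum>j<length ys. ((-1)^j * kdelta q (- (ys ! j))) *\<^sub>R (c y * prod_list (map c (del j ys))))"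
    by (simp add: sum.lessThan_Suc_shift sum_negf[symmetric] del: sum.lessThan_Suc)
  show ?case unfolding s e by (simp add: mult.assoc)
qed

definition Am :: "real list \<Rightarrow> nat \<Rightarrow> nat \<Rightarrow> real" where
  "Am ps = skew_upper (\<lambda>i j. heaviside (ps ! i) * kdelta (ps ! i) (- (ps ! j)))"

lemma skew_skew: "skew_upper M i j = - skew_upper M j i"
  by (simp add: skew_upper_def)

lemma hh_mono: "hh j a < hh j b \<longleftrightarrow> a < b"
  by (simp add: hh_def)

lemma Am_minor:
  assumes j: "1 \<le> j" "j \<le> length xs" and ab: "a < length xs - 1" "b < length xs - 1"
  shows "Am (x # xs) (hh j a) (hh j b) = Am (del (j - 1) xs) a b"
proof -
  have n: "(x # xs) ! hh j a = del (j - 1) xs ! a" if "a < length xs - 1" for a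
    using that j by (auto simp: hh_def nth_del)
  have "hh j a < hh j b \<longleftrightarrow> a < b" "hh j b < hh j a \<longleftrightarrow> b < a" by (simp_all add: hh_mono)
  then show ?thesis unfolding Am_def skew_upper_def using n[OF ab(1)] n[OF ab(2)] by simp
qed

lemma wick: "set ps \<subseteq> all \<Longrightarrow> G0 * prod_list (map c ps) * G0 = pfaffian (length ps) (Am ps) *\<^sub>R G0"
proof (induction "length ps" arbitrary: ps rule: less_induct)
  case less
  show ?case
  proof (cases ps)
    case Nil
    then show ?thesis using GG by (simp add: pf0)
  next
    case (Cons x xs)
    note ps = Cons
    have x: "x \<in> all" and xs: "set xs \<subseteq> all" using less.prems ps by auto
    have xnz: "x \<noteq> 0" using all_cases[OF L_pos x] by auto
    show ?thesis
    proof (cases xs)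
      case Nil
      have "G0 * c x * G0 = 0"
      proof (cases "0 < x")
        case True then show ?thesis using c_G[OF x] by (simp add: mult.assoc)
      next
        case False then show ?thesis using G_c[OF x] xnz by simp
      qed
      moreover have "pfaffian (Suc 0) (Am [x]) = 0" by (simp add: pfaffian_def)
      ultimately show ?thesis using ps Nil by simp
    next
      case (Cons y zs)
      have lxs: "length xs = length zs + 1" using Cons by simp
      have lps: "length ps = length zs + 2" using ps Cons by simp
      have A0: "Am ps 0 j = heaviside x * kdelta x (- (xs ! (j - 1)))" if "1 \<le> j" for j
        using that ps by (simp add: Am_def skew_upper_def)
      have pf: "pfaffian (length ps) (Am ps) = (\<Sum>j<length xs. (-1)^j * (heaviside x * kdelta x (- (xs ! j)))
           * pfaffian (length (del j xs)) (Am (del j xs)))"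
      proof -
        have "pfaffian (length ps) (Am ps) = (\<Sum>j\<in>{1..length zs + 1}. (-1)^(j-1) * Am ps 0 j *
            pfaffian (length zs) (\<lambda>a b. Am ps (hh j a) (hh j b)))"
          unfolding lps by (rule pf_rec) (unfold Am_def, rule skew_skew)
        also have "\<dots> = (\<Sum>j\<in>{1..length xs}. (-1)^(j-1) * (heaviside x * kdelta x (- (xs ! (j - 1))))
            * pfaffian (length (del (j-1) xs)) (Am (del (j-1) xs)))"
        proof (rule sum.cong)
          fix j assume j: "j \<in> {1..length xs}"
          have jl: "j - 1 < length xs" using j lxs by auto
          have ld: "length (del (j-1) xs) = length zs" using lxs length_del[OF jl] by simp
          have "pfaffian (length zs) (\<lambda>a b. Am ps (hh j a) (hh j b)) = pfaffian (length zs) (Am (del (j-1) xs))"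
            by (rule pf_cong) (use j lxs ps in \<open>simp add: Am_minor\<close>)
          then show "(-1)^(j-1) * Am ps 0 j * pfaffian (length zs) (\<lambda>a b. Am ps (hh j a) (hh j b))
              = (-1)^(j-1) * (heaviside x * kdelta x (- (xs ! (j - 1)))) * pfaffian (length (del (j-1) xs)) (Am (del (j-1) xs))"
            using A0[of j] j ld by simp
        qed (simp add: lxs)
        also have "\<dots> = (\<Sum>j<length xs. (-1)^j * (heaviside x * kdelta x (- (xs ! j)))
           * pfaffian (length (del j xs)) (Am (del j xs)))"
          by (simp add: sum.atLeast1_atMost_eq)
        finally show ?thesis .
      qed
      show ?thesis
      proof (cases "0 < x")
        case False
        then have "x < 0" using xnz by simp
        then have "G0 * prod_list (map c ps) * G0 = 0" using G_c[OF x] ps by (simp add: mult.assoc[symmetric])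
        moreover have "heaviside x = 0" using False by (simp add: heaviside_def)
        ultimately show ?thesis unfolding pf by simp
      next
        case True
        have xp: "x \<in> pos" using all_cases[OF L_pos x] True by auto
        have IH: "G0 * prod_list (map c (del j xs)) * G0 = pfaffian (length (del j xs)) (Am (del j xs)) *\<^sub>R G0"
          if "j < length xs" for j
          using less.hyps[of "del j xs"] that ps set_del[of j xs] xs by (simp add: length_del)
        have "G0 * prod_list (map c ps) * G0 = G0 * (g x * prod_list (map c xs)) * G0"
          using ps True by (simp add: c_def mult.assoc)
        also have "\<dots> = (\<Sum>j<length xs. ((-1)^j * kdelta x (- (xs ! j))) *\<^sub>R (G0 * prod_list (map c (del j xs)) * G0))
            + ((-1)^length xs) *\<^sub>R (G0 * prod_list (map c xs) * (g x * G0))"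
          unfolding expand[OF xp xs] by (simp add: algebra_simps sum_distrib_left sum_distrib_right)
        also have "\<dots> = (\<Sum>j<length xs. ((-1)^j * kdelta x (- (xs ! j))) *\<^sub>R (pfaffian (length (del j xs)) (Am (del j xs)) *\<^sub>R G0))"
          using gG[OF xp] IH by simp
        also have "\<dots> = pfaffian (length ps) (Am ps) *\<^sub>R G0"
          unfolding pf using True by (simp add: heaviside_def scaleR_sum_left mult.assoc)
        finally show ?thesis .
      qed
    qed
  qed
qed

end



lemma prod_sum_PiE:
  fixes F :: "nat \<Rightarrow> 'b \<Rightarrow> 'a::{monoid_mult, comm_monoid_add, semiring_0}"
  assumes S: "finite S"
  shows "prod_list (map (\<lambda>i. \<Sum>x\<in>S. F i x) [0..<m])
     = (\<Sum>p\<in>PiE {..<m} (\<lambda>_. S). prod_list (map (\<lambda>i. F i (p i)) [0..<m]))"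
proof (induction m)
  case 0
  then show ?case by simp
next
  case (Suc m)
  have fin: "finite (PiE {..<m} (\<lambda>_. S))" using S by (simp add: finite_PiE)
  have "prod_list (map (\<lambda>i. \<Sum>x\<in>S. F i x) [0..<Suc m])
      = (\<Sum>p\<in>PiE {..<m} (\<lambda>_. S). prod_list (map (\<lambda>i. F i (p i)) [0..<m])) * (\<Sum>x\<in>S. F m x)"
    using Suc by simp
  also have "\<dots> = (\<Sum>p\<in>PiE {..<m} (\<lambda>_. S). \<Sum>y\<in>S. prod_list (map (\<lambda>i. F i (p i)) [0..<m]) * F m y)"
    by (simp add: sum_distrib_left sum_distrib_right) (rule sum.swap)
  also have "\<dots> = (\<Sum>(y, p)\<in>S \<times> PiE {..<m} (\<lambda>_. S). prod_list (map (\<lambda>i. F i ((p(m := y)) i)) [0..<Suc m]))"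
  proof -
    have "prod_list (map (\<lambda>i. F i ((p(m := y)) i)) [0..<Suc m]) = prod_list (map (\<lambda>i. F i (p i)) [0..<m]) * F m y"
      for p y
    proof -
      have e: "prod_list (map (\<lambda>i. F i ((p(m := y)) i)) [0..<m]) = prod_list (map (\<lambda>i. F i (p i)) [0..<m])"
        by (rule arg_cong[where f=prod_list], rule map_cong) auto
      have "prod_list (map (\<lambda>i. F i ((p(m := y)) i)) [0..<Suc m])
          = prod_list (map (\<lambda>i. F i ((p(m := y)) i)) [0..<m]) * F m y" by simp
      then show ?thesis unfolding e .
    qed
    then show ?thesis
      by (subst sum.swap) (simp add: sum.cartesian_product)
  qed
  also have "\<dots> = (\<Sum>p\<in>(\<lambda>(y, g). g(m := y)) ` (S \<times> PiE {..<m} (\<lambda>_. S)). prod_list (map (\<lambda>i. F i (p i)) [0..<Suc m]))"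
  proof -
    have "inj_on (\<lambda>(y, g). g(m := y)) (S \<times> PiE {..<m} (\<lambda>_. S))"
      using inj_combinator[of m "{..<m}" "\<lambda>_. S"] by simp
    then show ?thesis by (subst sum.reindex) (auto simp: case_prod_unfold)
  qed
  also have "(\<lambda>(y, g). g(m := y)) ` (S \<times> PiE {..<m} (\<lambda>_. S)) = PiE {..<Suc m} (\<lambda>_. S)"
    using PiE_insert_eq[of m "{..<m}" "\<lambda>_. S"] by (simp add: lessThan_Suc)
  finally show ?case .
qed

lemma prod_list_scaleR:
  fixes h :: "nat \<Rightarrow> 'a::real_algebra_1"
  shows "prod_list (map (\<lambda>i. r *\<^sub>R h i) xs) = (r ^ length xs) *\<^sub>R prod_list (map h xs)"
  by (induction xs) (simp_all add: mult_scaleR_left mult_scaleR_right)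

lemma prod_split:
  fixes w v :: "nat \<Rightarrow> 'a::monoid_mult"
  shows "(\<And>i j. i < m \<Longrightarrow> j < m \<Longrightarrow> w i * v j = v j * w i) \<Longrightarrow>
    prod_list (map (\<lambda>i. w i * v i) [0..<m]) = prod_list (map w [0..<m]) * prod_list (map v [0..<m])"
proof (induction m)
  case 0 then show ?case by simp
next
  case (Suc m)
  have IH: "prod_list (map (\<lambda>i. w i * v i) [0..<m]) = prod_list (map w [0..<m]) * prod_list (map v [0..<m])"
    using Suc by simp
  have c: "w m * prod_list (map v [0..<m]) = prod_list (map v [0..<m]) * w m"
    using Suc.prems by (intro comm_prod_list) auto
  have "prod_list (map (\<lambda>i. w i * v i) [0..<Suc m])
      = prod_list (map w [0..<m]) * (prod_list (map v [0..<m]) * w m) * v m"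
    using IH by (simp add: mult.assoc)
  also have "\<dots> = prod_list (map w [0..<m]) * (w m * prod_list (map v [0..<m])) * v m"
    using c by (simp only:)
  also have "\<dots> = prod_list (map w [0..<Suc m]) * prod_list (map v [0..<Suc m])"
    by (simp add: mult.assoc)
  finally show ?case .
qed

theorem lemma1:
  fixes L n :: nat
    and adj :: "'a::real_algebra_1 \<Rightarrow> 'a"
    and g :: "real \<Rightarrow> 'a"
    and W :: "nat \<Rightarrow> real \<Rightarrow> 'a"
    and a :: "nat \<Rightarrow> 'a"
  assumes L_pos: "0 < L"
    and adj: "is_adjoint adj"
    and car_gg: "\<And>p q. p \<in> pos_momenta L \<Longrightarrow> q \<in> pos_momenta L \<Longrightarrow>
                   g p * g q + g q * g p = 0"
    and car_ggd: "\<And>p q. p \<in> pos_momenta L \<Longrightarrow> q \<in> pos_momenta L \<Longrightarrow>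
                   g p * adj (g q) + adj (g q) * g p = (if p = q then 1 else 0)"
    and W_adj: "\<And>i p. i < n \<Longrightarrow> p \<in> pos_momenta L \<Longrightarrow> W i (- p) = adj (W i p)"
    and W_comm_g: "\<And>i p q. i < n \<Longrightarrow> p \<in> all_momenta L \<Longrightarrow> q \<in> pos_momenta L \<Longrightarrow>
                   W i p * g q = g q * W i p"
    and W_comm_gd: "\<And>i p q. i < n \<Longrightarrow> p \<in> all_momenta L \<Longrightarrow> q \<in> pos_momenta L \<Longrightarrow>
                   W i p * adj (g q) = adj (g q) * W i p"
    and a_def: "\<And>i. i < n \<Longrightarrow> a i = (1 / sqrt (real L)) *\<^sub>R
                   (\<Sum>p\<in>pos_momenta L. W i p * g p + W i (- p) * adj (g p))"
    and a_majorana: "\<And>i. i < n \<Longrightarrow> adj (a i) = a i \<and> a i * a i = 1"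
  shows "ghost_vacuum L g adj * prod_list (map a [0..<n]) * ghost_vacuum L g adj
         = (1 / sqrt (real L) ^ n) *\<^sub>R
           (\<Sum>p\<in>PiE {..<n} (\<lambda>_. all_momenta L).
              prod_list (map (\<lambda>i. W i (p i)) [0..<n])
              * of_real (pfaffian n (skew_upper (\<lambda>i j. heaviside (p i) * kdelta (p i) (- p j))))
              * ghost_vacuum L g adj)"
proof -
  interpret ghost L g adj
    by unfold_locales (use L_pos adj car_gg car_ggd in auto)
  let ?r = "1 / sqrt (real L)"
  let ?P = "PiE {..<n} (\<lambda>_. all_momenta L)"
  have finA: "finite all" using finite_all[OF L_pos] .
  have finP: "finite pos" using finite_pos[OF L_pos] .
  have a_sum: "a i = ?r *\<^sub>R (\<Sum>p\<in>all. W i p * c p)" if i: "i < n" for i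
  proof -
    have disj: "pos \<inter> uminus ` pos = {}" unfolding pos_momenta_def by auto
    have "(\<Sum>p\<in>all. W i p * c p) = (\<Sum>p\<in>pos. W i p * c p) + (\<Sum>p\<in>uminus ` pos. W i p * c p)"
      unfolding all_eq[OF L_pos] using finP disj by (simp add: sum.union_disjoint)
    also have "(\<Sum>p\<in>uminus ` pos. W i p * c p) = (\<Sum>p\<in>pos. W i (- p) * c (- p))"
      by (subst sum.reindex) (auto simp: inj_on_def)
    also have "(\<Sum>p\<in>pos. W i (- p) * c (- p)) = (\<Sum>p\<in>pos. W i (- p) * adj (g p))"
      by (rule sum.cong) (auto simp: c_def pos_momenta_def)
    also have "(\<Sum>p\<in>pos. W i p * c p) = (\<Sum>p\<in>pos. W i p * g p)"
      by (rule sum.cong) (auto simp: c_def pos_momenta_def)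
    finally show ?thesis using a_def[OF i] by (simp add: sum.distrib)
  qed
  have "prod_list (map a [0..<n]) = prod_list (map (\<lambda>i. ?r *\<^sub>R (\<Sum>p\<in>all. W i p * c p)) [0..<n])"
    by (rule arg_cong[where f=prod_list], rule map_cong) (auto simp: a_sum)
  also have "\<dots> = ?r ^ n *\<^sub>R prod_list (map (\<lambda>i. \<Sum>p\<in>all. W i p * c p) [0..<n])"
    by (simp add: prod_list_scaleR)
  also have "\<dots> = ?r ^ n *\<^sub>R (\<Sum>p\<in>?P. prod_list (map (\<lambda>i. W i (p i) * c (p i)) [0..<n]))"
    by (simp add: prod_sum_PiE[OF finA])
  finally have pa: "prod_list (map a [0..<n]) = ?r ^ n *\<^sub>R (\<Sum>p\<in>?P. prod_list (map (\<lambda>i. W i (p i) * c (p i)) [0..<n]))" .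
  have trm: "G0 * prod_list (map (\<lambda>i. W i (p i) * c (p i)) [0..<n]) * G0 =
      prod_list (map (\<lambda>i. W i (p i)) [0..<n])
      * of_real (pfaffian n (skew_upper (\<lambda>i j. heaviside (p i) * kdelta (p i) (- p j)))) * G0"
    if p: "p \<in> ?P" for p
  proof -
    have pa: "p i \<in> all" if "i < n" for i using p that by auto
    have Wc: "W i (p i) * c (p j) = c (p j) * W i (p i)" if "i < n" "j < n" for i j
      using all_cases[OF L_pos pa[OF that(2)]] W_comm_g[OF that(1) pa[OF that(1)]] W_comm_gd[OF that(1) pa[OF that(1)]]
      by (auto simp: c_def)
    have WG: "W i (p i) * G0 = G0 * W i (p i)" if "i < n" for i
      by (rule G_comm) (use W_comm_g[OF that pa[OF that]] W_comm_gd[OF that pa[OF that]] in auto)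
    have GW: "G0 * prod_list (map (\<lambda>i. W i (p i)) [0..<n]) = prod_list (map (\<lambda>i. W i (p i)) [0..<n]) * G0"
      by (rule comm_prod_list) (auto simp: WG)
    have ps: "set (map p [0..<n]) \<subseteq> all" using pa by auto
    have pf: "pfaffian (length (map p [0..<n])) (Am (map p [0..<n]))
        = pfaffian n (skew_upper (\<lambda>i j. heaviside (p i) * kdelta (p i) (- p j)))"
      by simp (rule pf_cong, simp add: Am_def skew_upper_def)
    have "G0 * prod_list (map (\<lambda>i. W i (p i) * c (p i)) [0..<n]) * G0
       = G0 * (prod_list (map (\<lambda>i. W i (p i)) [0..<n]) * prod_list (map (\<lambda>i. c (p i)) [0..<n])) * G0"
      by (subst prod_split[of n]) (auto simp: Wc)
    also have "\<dots> = prod_list (map (\<lambda>i. W i (p i)) [0..<n]) * (G0 * prod_list (map c (map p [0..<n])) * G0)"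
      using GW by (simp add: mult.assoc[symmetric] map_map o_def)
    also have "\<dots> = prod_list (map (\<lambda>i. W i (p i)) [0..<n]) * (pfaffian n (skew_upper (\<lambda>i j. heaviside (p i) * kdelta (p i) (- p j))) *\<^sub>R G0)"
      unfolding wick[OF ps] pf ..
    finally show ?thesis by (simp add: scaleR_conv_of_real mult.assoc)
  qed
  have "G0 * prod_list (map a [0..<n]) * G0 = ?r ^ n *\<^sub>R (\<Sum>p\<in>?P. G0 * prod_list (map (\<lambda>i. W i (p i) * c (p i)) [0..<n]) * G0)"
    unfolding pa by (simp add: sum_distrib_left sum_distrib_right)
  also have "\<dots> = ?r ^ n *\<^sub>R (\<Sum>p\<in>?P. prod_list (map (\<lambda>i. W i (p i)) [0..<n])
      * of_real (pfaffian n (skew_upper (\<lambda>i j. heaviside (p i) * kdelta (p i) (- p j)))) * G0)"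
    by (simp add: trm cong: sum.cong)
  finally show ?thesis by (simp add: power_one_over)
qed


end
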